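(* Let $b\ge 2$ and $k\ge 1$ be integers, set $B=b^k$, let $m\ge 1$ be an integer with $\gcd(m,b)=1$, and let $r$ be an integer with $0\le r<m$. Call an integer $s\ge 1$ admissible if $s\equiv r\pmod m$ and $\gcd(s,b)=1$. For admissible $s$, define $\omega_s:=\operatorname{ord}_{ms}(B)$ and $n_s:=\sum_{j=0}^{s-1} B^{j\omega_s}$. If $s$ and $s'$ are distinct admissible integers, then $n_s\neq n_{s'}$.
   Context: For integers $a$ and $N\ge 1$ with $\gcd(a,N)=1$, $\operatorname{ord}_N(a)$ denotes the least positive integer $\omega$ with $a^\omega\equiv 1\pmod N$ (so $\operatorname{ord}_1(a)=1$). *)

theory Defs
  imports "HOL-Number_Theory.Number_Theory"
begin

definition admissible :: "nat \<Rightarrow> nat \<Rightarrow> nat \<Rightarrow> nat \<Rightarrow> bool" where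
  "admissible b m r s \<longleftrightarrow> s \<ge> 1 \<and> [s = r] (mod m) \<and> coprime s b"

definition n_s :: "nat \<Rightarrow> nat \<Rightarrow> nat \<Rightarrow> nat" where
  "n_s B m s = (\<Sum>j<s. B ^ (j * ord (m * s) B))"

end

theory Submission
  imports Defs
begin

definition gg :: "nat \<Rightarrow> nat \<Rightarrow> nat \<Rightarrow> nat" where
  "gg B w s = (\<Sum>j<s. B ^ (j * w))"

lemma gg_Suc: "gg B w (Suc s) = 1 + B ^ w * gg B w s"
  unfolding gg_def sum.lessThan_Suc_shift
  by (simp add: sum_distrib_left power_add)

lemma gg_Suc2: "gg B w (Suc s) = gg B w s + B ^ (s * w)"
  unfolding gg_def by simp

lemma gg_mod:
  assumes "B \<ge> 2" "w \<ge> 1" "s \<ge> 1"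
  shows "gg B w s mod B = 1"
proof -
  obtain t where t: "s = Suc t" using assms(3) by (cases s) auto
  have "B dvd B ^ w" using assms(2) by (simp add: dvd_power)
  hence "(1 + B ^ w * gg B w t) mod B = 1 mod B"
    by (metis dvd_mult2 mod_mult_self2_is_0 mult.commute mod_add_right_eq add.right_neutral dvd_imp_mod_0)
  thus ?thesis using t assms(1) by (simp add: gg_Suc)
qed

lemma val_eq:
  fixes B x y a c :: nat
  assumes "B \<ge> 2" "x mod B = 1" "y mod B = 1" "B ^ a * x = B ^ c * y"
  shows "a = c"
proof (rule ccontr)
  assume ne: "a \<noteq> c"
  have B0: "B > 0" using assms(1) by simp
  {
    fix a c x y :: nat
    assume "a < c" "x mod B = 1" "B ^ a * x = B ^ c * y"
    then have "B ^ a * x = B ^ a * (B ^ (c - a) * y)"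
      by (simp add: power_add[symmetric])
    hence "x = B ^ (c - a) * y" using B0 by simp
    hence "B dvd x" using \<open>a < c\<close> by (simp add: dvd_power)
    hence False using \<open>x mod B = 1\<close> assms(1) by simp
  }
  note * = this
  show False
  proof (cases "a < c")
    case True then show ?thesis using *[of a c x y] assms by simp
  next
    case False then have "c < a" using ne by simp
    then show ?thesis using *[of c a y x] assms by simp
  qed
qed

lemma gg_strict: "B \<ge> 2 \<Longrightarrow> strict_mono (gg B w)"
  unfolding strict_mono_Suc_iff by (simp add: gg_Suc2)

lemma gg_inj:
  assumes "B \<ge> 2" "w \<ge> 1" "w' \<ge> 1" "s \<ge> 1" "s' \<ge> 1" "gg B w s = gg B w' s'"
  shows "s = s'"
proof -
  obtain t where t: "s = Suc t" using assms(4) by (cases s) auto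
  obtain t' where t': "s' = Suc t'" using assms(5) by (cases s') auto
  have e: "B ^ w * gg B w t = B ^ w' * gg B w' t'" using assms(6) t t' by (simp add: gg_Suc)
  show ?thesis
  proof (cases "t = 0")
    case True
    then have "gg B w' t' = 0" using e assms(1) by (simp add: gg_def)
    hence "t' = 0" using gg_mod[OF assms(1,3), of t'] by (cases t') auto
    thus ?thesis using t t' True by simp
  next
    case False
    show ?thesis
    proof (cases "t' = 0")
      case True
      then have "gg B w t = 0" using e assms(1) by (simp add: gg_def)
      hence False using gg_mod[OF assms(1,2), of t] False by simp
      thus ?thesis ..
    next
      case F2: False
      have "w = w'" using val_eq[OF assms(1) gg_mod[OF assms(1,2), of t] gg_mod[OF assms(1,3), of t'] e]
        False F2 by simp
      hence "gg B w s = gg B w s'" using assms(6) by simp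
      thus ?thesis using strict_mono_eq[OF gg_strict[OF assms(1)]] by simp
    qed
  qed
qed

theorem lemma5p2:
  fixes b k m r s s' :: nat
  assumes "b \<ge> 2" and "k \<ge> 1" and "m \<ge> 1" and "coprime m b" and "r < m"
    and "admissible b m r s" and "admissible b m r s'" and "s \<noteq> s'"
  shows "n_s (b ^ k) m s \<noteq> n_s (b ^ k) m s'"
proof
  assume eq: "n_s (b ^ k) m s = n_s (b ^ k) m s'"
  have B2: "b ^ k \<ge> 2"
    by (metis assms(1,2) dual_order.trans one_le_power power_one_right power_increasing Suc_1 Suc_leD)
  have cs: "coprime s b" "s \<ge> 1" using assms(6) by (auto simp: admissible_def)
  have cs': "coprime s' b" "s' \<ge> 1" using assms(7) by (auto simp: admissible_def)
  have "coprime (m * s) (b ^ k)" using cs assms(4) by simp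
  hence w: "ord (m * s) (b ^ k) \<ge> 1" by (simp add: Suc_le_eq)
  have "coprime (m * s') (b ^ k)" using cs' assms(4) by simp
  hence w': "ord (m * s') (b ^ k) \<ge> 1" by (simp add: Suc_le_eq)
  have "gg (b ^ k) (ord (m * s) (b ^ k)) s = gg (b ^ k) (ord (m * s') (b ^ k)) s'"
    using eq by (simp add: n_s_def gg_def)
  hence "s = s'" using gg_inj[OF B2 w w' cs(2) cs'(2)] by simp
  thus False using assms(8) by simp
qed

end
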